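(* Let $r=(r_0,r_1,r_2,r_3,r_4)\in\mathbb Z^5$ be a quintuple of distinct integers. There is a constant $c=c(r)>0$ such that for every $N\in\mathbb N$ there is a subset $B\subseteq\{0,1,\dots,N-1\}$ with $|B|>Ne^{-c\sqrt{\log N}}$ such that there is no non-constant polynomial $P\in\mathbb Q[x]$ of degree at most $2$ with $P(r_i)\in B$ for all $i=0,\dots,4$.
   Context: The paper phrases the conclusion as "$B$ does not contain any QC5($r$)", where a set $\{a_0,\dots,a_4\}\subseteq\mathbb Z$ is QC5($r$) if $a_i=P(r_i)$ for some $P\in\mathbb Q[x]$ of degree at most 2. *)

theory Defs
  imports Complex_Main "HOL-Computational_Algebra.Polynomial"
begin

definition contains_QC5 :: "(nat \<Rightarrow> int) \<Rightarrow> nat set \<Rightarrow> bool" where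
  "contains_QC5 r B \<longleftrightarrow>
     (\<exists>P :: rat poly. 1 \<le> degree P \<and> degree P \<le> 2 \<and>
        (\<forall>i<5. poly P (of_int (r i)) \<in> of_nat ` B))"

end

theory Submission
  imports Defs
begin

fun dval :: "nat \<Rightarrow> nat list \<Rightarrow> nat" where
  "dval M [] = 0"
| "dval M (a # xs) = a + M * dval M xs"

lemma dval_lt: "set xs \<subseteq> {..<M} \<Longrightarrow> dval M xs < M ^ length xs"
proof (induction xs)
  case Nil then show ?case by simp
next
  case (Cons a xs)
  then have a: "a < M" and h: "dval M xs < M ^ length xs" by auto
  then have "dval M xs + 1 \<le> M ^ length xs" by simp
  then have "M * (dval M xs + 1) \<le> M * M ^ length xs" by (rule mult_le_mono2)
  moreover have "a + M * dval M xs < M + M * dval M xs" using a by simp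
  ultimately show ?case by (simp add: algebra_simps)
qed

lemma dval_inj: "length xs = length ys \<Longrightarrow> set xs \<subseteq> {..<M} \<Longrightarrow> set ys \<subseteq> {..<M}
   \<Longrightarrow> dval M xs = dval M ys \<Longrightarrow> xs = ys"
proof (induction xs arbitrary: ys)
  case Nil then show ?case by simp
next
  case (Cons a xs)
  then obtain b zs where ys: "ys = b # zs" by (cases ys) auto
  have ab: "a < M" "b < M" using Cons.prems ys by auto
  have e: "a + M * dval M xs = b + M * dval M zs" using Cons.prems ys by simp
  then have "(a + M * dval M xs) mod M = (b + M * dval M zs) mod M" by simp
  then have "a = b" using ab by simp
  with e ab have "dval M xs = dval M zs" by simp
  then have "xs = zs" using Cons ys by auto
  then show ?case using ys \<open>a = b\<close> by simp
qed

lemma nocarry: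
  fixes e :: "nat \<Rightarrow> int"
  assumes "\<forall>i<5. length (X i) = n \<and> set (X i) \<subseteq> {..<d}"
    and "(\<Sum>i<5. \<bar>e i\<bar>) * int d < int M"
    and "(\<Sum>i<5. e i * int (dval M (X i))) = 0"
  shows "\<forall>j<n. (\<Sum>i<5. e i * int (X i ! j)) = 0"
  using assms
proof (induction n arbitrary: X)
  case 0 then show ?case by simp
next
  case (Suc n)
  define a where "a = (\<lambda>i. hd (X i))"
  define t where "t = (\<lambda>i. tl (X i))"
  have Xi: "X i = a i # t i" if "i < 5" for i
    using Suc.prems(1) that unfolding a_def t_def by (cases "X i") auto
  have ad: "a i < d" "length (t i) = n" "set (t i) \<subseteq> {..<d}" if "i < 5" for i
  proof -
    have "length (a i # t i) = Suc n \<and> set (a i # t i) \<subseteq> {..<d}"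
      using Suc.prems(1) that by (simp only: Xi[OF that, symmetric])
    then show "a i < d" "length (t i) = n" "set (t i) \<subseteq> {..<d}" by auto
  qed
  have "(\<Sum>i<5. e i * int (dval M (X i))) = (\<Sum>i<5. e i * int (a i)) + int M * (\<Sum>i<5. e i * int (dval M (t i)))"
    by (simp add: Xi sum.distrib sum_distrib_left algebra_simps)
  then have eq: "(\<Sum>i<5. e i * int (a i)) + int M * (\<Sum>i<5. e i * int (dval M (t i))) = 0"
    using Suc.prems(3) by simp
  have bnd: "\<bar>\<Sum>i<5. e i * int (a i)\<bar> < int M"
  proof -
    have "\<bar>\<Sum>i<5. e i * int (a i)\<bar> \<le> (\<Sum>i<5. \<bar>e i * int (a i)\<bar>)" by (rule sum_abs)
    also have "\<dots> \<le> (\<Sum>i<5. \<bar>e i\<bar> * int d)"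
    proof (intro sum_mono)
      fix i assume "i \<in> {..<5::nat}"
      then have "int (a i) \<le> int d" using ad(1)[of i] by simp
      then show "\<bar>e i * int (a i)\<bar> \<le> \<bar>e i\<bar> * int d"
        by (simp add: abs_mult mult_left_mono)
    qed
    also have "\<dots> = (\<Sum>i<5. \<bar>e i\<bar>) * int d" by (simp add: sum_distrib_right)
    finally show ?thesis using Suc.prems(2) by simp
  qed
  have "int M dvd (\<Sum>i<5. e i * int (a i))"
    proof - have "(\<Sum>i<5. e i * int (a i)) = int M * (- (\<Sum>i<5. e i * int (dval M (t i))))" using eq by linarith then show ?thesis by simp qed
  then have a0: "(\<Sum>i<5. e i * int (a i)) = 0"
  proof (rule contrapos_pp)
    assume "(\<Sum>i<5. e i * int (a i)) \<noteq> 0"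
    from dvd_imp_le_int[OF this] have "\<not> int M dvd (\<Sum>i<5. e i * int (a i)) \<or> \<bar>int M\<bar> \<le> \<bar>\<Sum>i<5. e i * int (a i)\<bar>"
      by blast
    then show "\<not> int M dvd (\<Sum>i<5. e i * int (a i))" using bnd by auto
  qed
  have Mpos: "int M > 0" using bnd by linarith
  then have t0: "(\<Sum>i<5. e i * int (dval M (t i))) = 0" using eq a0 by simp
  have IH: "\<forall>j<n. (\<Sum>i<5. e i * int (t i ! j)) = 0"
    using Suc.IH[of t] ad Suc.prems(2) t0 by auto
  show ?case
  proof (intro allI impI)
    fix j assume "j < Suc n"
    show "(\<Sum>i<5. e i * int (X i ! j)) = 0"
    proof (cases j)
      case 0 then show ?thesis using a0 by (simp add: Xi)
    next
      case (Suc j') then show ?thesis using IH \<open>j < Suc n\<close> by (simp add: Xi)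
    qed
  qed
qed


lemma lag_id:
  fixes r0 r1 r2 t p0 p1 p2 :: "'a::comm_ring_1"
  shows "(r0-r1)*(r0-r2)*(r1-r2) * (p0 + p1*t + p2*t^2) =
     (t-r1)*(t-r2)*(r1-r2)*(p0 + p1*r0 + p2*r0^2) - (t-r0)*(t-r2)*(r0-r2)*(p0 + p1*r1 + p2*r1^2)
     + (t-r0)*(t-r1)*(r0-r1)*(p0 + p1*r2 + p2*r2^2)"
  by (simp add: power2_eq_square algebra_simps)

definition LA :: "real \<Rightarrow> real \<Rightarrow> real \<Rightarrow> real \<Rightarrow> real \<Rightarrow> real \<Rightarrow> real" where
  "LA r0 r1 r2 x0 x1 x2 = (r1*r2*(r1-r2)*x0 - r0*r2*(r0-r2)*x1 + r0*r1*(r0-r1)*x2) / ((r0-r1)*(r0-r2)*(r1-r2))"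
definition LB :: "real \<Rightarrow> real \<Rightarrow> real \<Rightarrow> real \<Rightarrow> real \<Rightarrow> real \<Rightarrow> real" where
  "LB r0 r1 r2 x0 x1 x2 = (-(r1+r2)*(r1-r2)*x0 + (r0+r2)*(r0-r2)*x1 - (r0+r1)*(r0-r1)*x2) / ((r0-r1)*(r0-r2)*(r1-r2))"
definition LC :: "real \<Rightarrow> real \<Rightarrow> real \<Rightarrow> real \<Rightarrow> real \<Rightarrow> real \<Rightarrow> real" where
  "LC r0 r1 r2 x0 x1 x2 = ((r1-r2)*x0 - (r0-r2)*x1 + (r0-r1)*x2) / ((r0-r1)*(r0-r2)*(r1-r2))"

lemma frac3: "(a::real)/V + (b/V)*t + (c/V)*t^2 = (a + b*t + c*t^2)/V"
  by (simp add: add_divide_distrib)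

lemma lag_inv:
  fixes r0 r1 r2 t x x0 x1 x2 :: real
  assumes "(r0-r1)*(r0-r2)*(r1-r2) \<noteq> 0"
    and "(r0-r1)*(r0-r2)*(r1-r2) * x = (t-r1)*(t-r2)*(r1-r2)*x0 - (t-r0)*(t-r2)*(r0-r2)*x1 + (t-r0)*(t-r1)*(r0-r1)*x2"
  shows "LA r0 r1 r2 x0 x1 x2 + LB r0 r1 r2 x0 x1 x2 * t + LC r0 r1 r2 x0 x1 x2 * t^2 = x"
proof -
  let ?V = "(r0-r1)*(r0-r2)*(r1-r2)"
  let ?a = "r1*r2*(r1-r2)*x0 - r0*r2*(r0-r2)*x1 + r0*r1*(r0-r1)*x2"
  let ?b = "-(r1+r2)*(r1-r2)*x0 + (r0+r2)*(r0-r2)*x1 - (r0+r1)*(r0-r1)*x2"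
  let ?c = "(r1-r2)*x0 - (r0-r2)*x1 + (r0-r1)*x2"
  have 1: "LA r0 r1 r2 x0 x1 x2 + LB r0 r1 r2 x0 x1 x2 * t + LC r0 r1 r2 x0 x1 x2 * t^2
     = (?a + ?b * t + ?c * t^2) / ?V"
    unfolding LA_def LB_def LC_def by (rule frac3)
  have 2: "?a + ?b * t + ?c * t^2 = (t-r1)*(t-r2)*(r1-r2)*x0 - (t-r0)*(t-r2)*(r0-r2)*x1 + (t-r0)*(t-r1)*(r0-r1)*x2"
    by (simp add: power2_eq_square algebra_simps)
  show ?thesis unfolding 1 2 assms(2)[symmetric] using assms(1) by simp
qed

lemma bounded_quad:
  fixes a b c K :: real
  assumes "\<forall>t. (a + b*t + c*t^2)^2 \<le> K"
  shows "c = 0 \<and> b = 0"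
proof -
  define g where "g = (\<lambda>t. a + b*t + c*t^2)"
  define s where "s = sqrt K"
  have gb: "\<bar>g t\<bar> \<le> s" for t
  proof -
    have "sqrt ((g t)^2) \<le> sqrt K" using assms unfolding g_def by (intro real_sqrt_le_mono) auto
    then show ?thesis unfolding s_def by simp
  qed
  have c0: "c = 0"
  proof (rule ccontr)
    assume "c \<noteq> 0"
    define t where "t = sqrt ((4*s+1)/(2*\<bar>c\<bar>))"
    have s0: "s \<ge> 0" using gb[of 0] by simp
    have tt: "t^2 = (4*s+1)/(2*\<bar>c\<bar>)" unfolding t_def using s0 \<open>c\<noteq>0\<close> by simp
    have "g t + g (-t) - 2 * g 0 = 2*c*t^2" unfolding g_def by (simp add: power2_eq_square algebra_simps)
    then have "\<bar>2*c*t^2\<bar> \<le> 4*s" using gb[of t] gb[of "-t"] gb[of 0] by linarith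
    moreover have "\<bar>2*c*t^2\<bar> = 4*s+1" using tt \<open>c\<noteq>0\<close> s0 by (simp add: abs_mult)
    ultimately show False by linarith
  qed
  have b0: "b = 0"
  proof (rule ccontr)
    assume "b \<noteq> 0"
    define t where "t = (2*s+1)/\<bar>b\<bar>"
    have s0: "s \<ge> 0" using gb[of 0] by simp
    have "g t - g 0 = b*t" unfolding g_def using c0 by simp
    then have "\<bar>b*t\<bar> \<le> 2*s" using gb[of t] gb[of 0] by linarith
    moreover have "\<bar>b*t\<bar> = 2*s+1" using \<open>b\<noteq>0\<close> s0 unfolding t_def by (simp add: abs_mult)
    ultimately show False by linarith
  qed
  show ?thesis using c0 b0 by simp
qed

lemma quad_poly:
  fixes P :: "'a::comm_ring_1 poly"
  assumes "degree P \<le> 2"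
  shows "poly P x = coeff P 0 + coeff P 1 * x + coeff P 2 * x^2"
proof -
  have "poly P x = (\<Sum>i\<le>2. coeff P i * x ^ i)"
    unfolding poly_altdef
    by (rule sum.mono_neutral_left) (use assms in \<open>auto simp: not_le coeff_eq_0\<close>)
  then show ?thesis by (simp add: numeral_2_eq_2)
qed

lemma quad_const_false:
  fixes P :: "rat poly"
  assumes "1 \<le> degree P" "degree P \<le> 2"
    and "r0 \<noteq> r1" "r0 \<noteq> r2" "r1 \<noteq> r2"
    and "poly P r0 = poly P r1" "poly P r0 = poly P r2"
  shows False
proof -
  let ?a = "coeff P 0" and ?b = "coeff P 1" and ?c = "coeff P 2"
  have e1: "?b * (r0 - r1) + ?c * (r0 - r1) * (r0 + r1) = 0"
    using assms(6) quad_poly[OF assms(2)] by (simp add: power2_eq_square algebra_simps)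
  have e2: "?b * (r0 - r2) + ?c * (r0 - r2) * (r0 + r2) = 0"
    using assms(7) quad_poly[OF assms(2)] by (simp add: power2_eq_square algebra_simps)
  have "(r0 - r1) * (?b + ?c * (r0 + r1)) = 0" using e1 by (simp add: algebra_simps)
  then have f1: "?b + ?c * (r0 + r1) = 0" using assms(3) by simp
  have "(r0 - r2) * (?b + ?c * (r0 + r2)) = 0" using e2 by (simp add: algebra_simps)
  then have f2: "?b + ?c * (r0 + r2) = 0" using assms(4) by simp
  have "?c * (r1 - r2) = (?b + ?c * (r0 + r1)) - (?b + ?c * (r0 + r2))" by (simp add: algebra_simps)
  then have "?c * (r1 - r2) = 0" using f1 f2 by linarith
  then have c0: "?c = 0" using assms(5) by simp
  then have b0: "?b = 0" using f1 by simp
  have "degree P = 1 \<or> degree P = 2" using assms(1,2) by auto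
  moreover have "P \<noteq> 0" using assms(1) by auto
  then have lc: "coeff P (degree P) \<noteq> 0" by simp
  ultimately show False
  proof (elim disjE)
    assume h: "degree P = 1"
    have "coeff P (degree P) = coeff P 1" by (simp only: h)
    then show False using lc b0 by simp
  next
    assume h: "degree P = 2"
    have "coeff P (degree P) = coeff P 2" by (simp only: h)
    then show False using lc c0 by simp
  qed
qed


lemma div2_le: "\<And>x y::real. x - 1 < y \<Longrightarrow> 1 \<le> y \<Longrightarrow> x / 2 \<le> y" by linarith

lemma params:
  fixes W N :: nat
  assumes W1: "W \<ge> 1" and N2: "N \<ge> 2" and big: "sqrt (ln (real N)) \<ge> 2 + ln (real W)"
  shows "\<exists>n d. n \<ge> 1 \<and> d \<ge> 1 \<and> (W*d)^n \<le> N \<and>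
     real N * exp (- (ln (2 * real W) + 5) * sqrt (ln (real N))) < real (d^n) / real (n*d^2)"
proof -
  define L where "L = ln (real N)"
  define s where "s = sqrt L"
  have Npos: "real N > 0" using N2 by simp
  have L0: "L > 0" unfolding L_def using N2 by simp
  have sL: "s^2 = L" unfolding s_def using L0 by simp
  have lnW: "ln (real W) \<ge> 0" using W1 by simp
  have s2: "s \<ge> 2" using big lnW unfolding s_def L_def by linarith
  have sW: "s \<ge> ln (real W)" using big unfolding s_def L_def by linarith
  define n where "n = nat \<lfloor>s\<rfloor>"
  have n_le: "real n \<le> s" unfolding n_def using s2 by linarith
  have n_gt: "real n > s - 1" unfolding n_def using s2 by linarith
  have n1: "n \<ge> 1" using n_gt s2 by linarith
  have n_half: "real n \<ge> s/2" using n_gt s2 by linarith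
  have npos: "real n > 0" using n1 by simp
  define u where "u = exp (L / real n)"
  have upos: "u > 0" unfolding u_def by simp
  have un: "u ^ n = real N"
  proof -
    have "u ^ n = exp (real n * (L / real n))" unfolding u_def by (rule exp_of_nat_mult[symmetric])
    also have "\<dots> = exp L" using npos by simp
    also have "\<dots> = real N" unfolding L_def using Npos by simp
    finally show ?thesis .
  qed
  have Ln_ge: "L / real n \<ge> s"
  proof -
    have "s * real n \<le> s * s" using n_le s2 by (intro mult_left_mono) auto
    also have "\<dots> = L" using sL by (simp add: power2_eq_square)
    finally show ?thesis using npos by (simp add: field_simps)
  qed
  have Ln_le: "L / real n \<le> 2 * s"
  proof -
    have "L = s * s" using sL by (simp add: power2_eq_square)
    also have "\<dots> \<le> s * (2 * real n)" using n_half s2 by (intro mult_left_mono) auto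
    finally show ?thesis using npos by (simp add: field_simps)
  qed
  have uW: "u / real W \<ge> 1"
  proof -
    have "real W = exp (ln (real W))" using W1 by simp
    also have "\<dots> \<le> exp s" using sW by simp
    also have "\<dots> \<le> u" unfolding u_def using Ln_ge by simp
    finally show ?thesis using W1 by simp
  qed
  define d where "d = nat \<lfloor>u / real W\<rfloor>"
  have fl: "\<lfloor>u / real W\<rfloor> \<ge> 1" using uW by (simp add: le_floor_iff)
  have dfl: "real d = of_int \<lfloor>u / real W\<rfloor>" unfolding d_def using fl by simp
  have flb: "of_int \<lfloor>u / real W\<rfloor> \<le> u / real W" "of_int \<lfloor>u / real W\<rfloor> > u / real W - 1"
    by (simp_all add: of_int_floor_le)
  have d_le: "real d \<le> u / real W" using dfl flb by linarith
  have d_ge: "real d \<ge> u / (2 * real W)"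
  proof -
    have "real d > u / real W - 1" using dfl flb by linarith
    moreover have "real d \<ge> 1" using dfl fl by simp
    ultimately have "real d \<ge> (u / real W) / 2"
      using div2_le by blast
    then show ?thesis by simp
  qed
  have "real d \<ge> 1" using dfl fl by simp
  then have d1: "d \<ge> 1" by simp
  have Wd: "real W * real d \<le> u" using d_le W1 by (simp add: field_simps)
  have WdN: "(W*d)^n \<le> N"
  proof -
    have "real ((W*d)^n) = (real W * real d)^n" by simp
    also have "\<dots> \<le> u^n" using Wd by (intro power_mono) auto
    finally show ?thesis using un by linarith
  qed
  define c where "c = ln (2 * real W) + 5"
  have dn: "real (d^n) \<ge> real N / (2 * real W)^n"
  proof -
    have "real N / (2 * real W)^n = (u / (2 * real W))^n" using un by (simp add: power_divide)
    also have "\<dots> \<le> real d ^ n" using d_ge upos W1 by (intro power_mono) auto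
    finally show ?thesis by simp
  qed
  have dd: "real (n * d^2) \<le> real n * u^2"
  proof -
    have "real d \<le> u" using d_le W1 upos
    proof -
      have "u / real W \<le> u / 1" using W1 upos by (intro divide_left_mono) auto
      then show ?thesis using d_le by simp
    qed
    then have "real d ^ 2 \<le> u ^ 2" by (intro power_mono) auto
    then show ?thesis using npos by simp
  qed
  have pos1: "real (n * d^2) > 0" using n1 d1 by simp
  have key: "(2 * real W)^n * (real n * u^2) < exp (c * s)"
  proof -
    have e1: "(2 * real W)^n \<le> exp (s * ln (2 * real W))"
    proof -
      have "exp (real n * ln (2 * real W)) = exp (ln (2 * real W)) ^ n" by (rule exp_of_nat_mult)
      then have "(2 * real W)^n = exp (real n * ln (2 * real W))" using W1 by simp
      also have "\<dots> \<le> exp (s * ln (2 * real W))"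
        using n_le W1 by (simp add: mult_right_mono)
      finally show ?thesis .
    qed
    have e2: "real n < exp s" using n_le exp_ge_add_one_self[of s] by linarith
    have e3: "u^2 \<le> exp (4 * s)"
    proof -
      have "u^2 = exp (2 * (L / real n))" unfolding u_def by (simp add: exp_double[symmetric] power2_eq_square mult_exp_exp)
      also have "\<dots> \<le> exp (4 * s)" using Ln_le by simp
      finally show ?thesis .
    qed
    have "(2 * real W)^n * (real n * u^2) < exp (s * ln (2 * real W)) * (exp s * exp (4 * s))"
    proof (rule mult_le_less_imp_less[OF e1])
      show "real n * u\<^sup>2 < exp s * exp (4 * s)"
        using e2 e3 upos npos by (intro mult_less_le_imp_less) auto
    qed (use W1 upos npos in auto)
    also have "\<dots> = exp (c * s)" unfolding c_def by (simp only: mult_exp_exp) (simp add: algebra_simps)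
    finally show ?thesis .
  qed
  have "real N * exp (- c * s) < real (d^n) / real (n*d^2)"
  proof -
    have P: "(2 * real W)^n > 0" using W1 by simp
    have "real N * exp (- c * s) = real N / exp (c * s)" by (simp add: exp_minus field_simps)
    also have "\<dots> < real N / ((2 * real W)^n * (real n * u^2))"
      using key Npos P npos upos by (intro divide_strict_left_mono) auto
    also have "\<dots> = (real N / (2 * real W)^n) / (real n * u^2)" by simp
    also have "\<dots> \<le> real (d^n) / (real n * u^2)"
      using dn npos upos by (intro divide_right_mono) auto
    also have "\<dots> \<le> real (d^n) / real (n*d^2)"
      using dd pos1 by (intro divide_left_mono) auto
    finally show ?thesis .
  qed
  then show ?thesis using n1 d1 WdN unfolding c_def s_def L_def by blast
qed


lemma pigeon:
  assumes "finite S" "f ` S \<subseteq> {..<K}" "K > (0::nat)"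
  shows "\<exists>k<K. card S \<le> K * card {x\<in>S. f x = k}"
proof (rule ccontr)
  assume "\<not> ?thesis"
  then have h: "\<forall>k\<in>{..<K}. K * card {x\<in>S. f x = k} < card S" by auto
  have "card S = (\<Sum>k\<in>{..<K}. card {x\<in>S. f x = k})"
    using sum.group[OF assms(1) _ assms(2), of "\<lambda>_. 1::nat"] by simp
  then have "K * card S = (\<Sum>k\<in>{..<K}. K * card {x\<in>S. f x = k})" by (simp add: sum_distrib_left)
  also have "\<dots> < (\<Sum>k\<in>{..<K}. card S)"
    using h assms(3) by (intro sum_strict_mono) auto
  also have "\<dots> = K * card S" by simp
  finally show False by simp
qed

lemma sum5: "(\<Sum>i<5::nat. f i) = f 0 + f 1 + f 2 + f 3 + (f 4 :: 'a::comm_monoid_add)"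
  by (simp add: eval_nat_numeral)

lemma all5: "(\<forall>i<5. P i) \<longleftrightarrow> P 0 \<and> P 1 \<and> P 2 \<and> P 3 \<and> P (4::nat)"
  by (auto simp: eval_nat_numeral less_Suc_eq)

lemma const_false:
  fixes P :: "rat poly" and r :: "nat \<Rightarrow> int"
  assumes "inj_on r {..<5}" "1 \<le> degree P" "degree P \<le> 2"
    and "\<forall>i<5. poly P (of_int (r i)) = poly P (of_int (r 0))"
  shows False
proof -
  have dd1: "r 0 \<noteq> r 1"
  proof
    assume "r 0 = r 1"
    with assms(1) have "(0::nat) = 1" by (rule inj_onD) simp_all
    then show False by simp
  qed
  have dd2: "r 0 \<noteq> r 2"
  proof
    assume "r 0 = r 2"
    with assms(1) have "(0::nat) = 2" by (rule inj_onD) simp_all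
    then show False by simp
  qed
  have dd3: "r 1 \<noteq> r 2"
  proof
    assume "r 1 = r 2"
    with assms(1) have "(1::nat) = 2" by (rule inj_onD) simp_all
    then show False by simp
  qed
  have d: "r 0 \<noteq> r 1" "r 0 \<noteq> r 2" "r 1 \<noteq> r 2" using dd1 dd2 dd3 by blast+
  have h1: "poly P (of_int (r 1)) = poly P (of_int (r 0))" using assms(4)[rule_format, of 1] by simp
  have h2: "poly P (of_int (r 2)) = poly P (of_int (r 0))" using assms(4)[rule_format, of 2] by simp
  have d': "(of_int (r 0) :: rat) \<noteq> of_int (r 1)" "(of_int (r 0) :: rat) \<noteq> of_int (r 2)"
     "(of_int (r 1) :: rat) \<noteq> of_int (r 2)" using d by simp_all
  show False
    by (rule quad_const_false[OF assms(2,3) d' h1[symmetric] h2[symmetric]])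
qed


definition erel :: "(nat \<Rightarrow> int) \<Rightarrow> nat \<Rightarrow> nat \<Rightarrow> int" where
  "erel r m i = (if i = 0 then -((r m - r 1)*(r m - r 2)*(r 1 - r 2))
     else if i = 1 then (r m - r 0)*(r m - r 2)*(r 0 - r 2)
     else if i = 2 then -((r m - r 0)*(r m - r 1)*(r 0 - r 1))
     else if i = m then (r 0 - r 1)*(r 0 - r 2)*(r 1 - r 2) else 0)"

definition sqn :: "nat list \<Rightarrow> nat" where
  "sqn xs = (\<Sum>j<length xs. (xs ! j)^2)"

lemma erel_sum:
  assumes "m = 3 \<or> m = 4"
  shows "(\<Sum>i<5. of_int (erel r m i) * (x i :: 'a::comm_ring_1)) =
     of_int ((r 0 - r 1)*(r 0 - r 2)*(r 1 - r 2)) * x m -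
     (of_int ((r m - r 1)*(r m - r 2)*(r 1 - r 2)) * x 0 - of_int ((r m - r 0)*(r m - r 2)*(r 0 - r 2)) * x 1
      + of_int ((r m - r 0)*(r m - r 1)*(r 0 - r 1)) * x 2)"
  using assms by (auto simp: sum5 erel_def algebra_simps)

lemma rel_poly:
  fixes P :: "rat poly"
  assumes "degree P \<le> 2" "\<forall>i<5. poly P (of_int (r i)) = of_nat (Y i)" "m = 3 \<or> m = 4"
  shows "(\<Sum>i<5. erel r m i * int (Y i)) = 0"
proof -
  have mm: "m < 5" using assms(3) by auto
  let ?p = "\<lambda>t::rat. coeff P 0 + coeff P 1 * t + coeff P 2 * t^2"
  have Y: "of_nat (Y i) = ?p (of_int (r i))" if "i < 5" for i
    using assms(2) that quad_poly[OF assms(1)] by metis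
  have "(of_int (\<Sum>i<5. erel r m i * int (Y i)) :: rat) = (\<Sum>i<5. of_int (erel r m i) * (of_nat (Y i) :: rat))"
    by simp
  also have "\<dots> = (\<Sum>i<5. of_int (erel r m i) * ?p (of_int (r i)))"
    by (intro sum.cong) (auto simp: Y)
  also have "\<dots> = 0"
    unfolding erel_sum[OF assms(3)]
    using lag_id[of "of_int (r 0)" "of_int (r 1)" "of_int (r 2)" "coeff P 0" "coeff P 1" "of_int (r m)" "coeff P 2"]
    by simp
  finally show ?thesis by (metis of_int_eq_0_iff)
qed

lemma rel_real:
  fixes x :: "nat \<Rightarrow> nat"
  assumes "(\<Sum>i<5. erel r m i * int (x i)) = 0" "m = 3 \<or> m = 4"
    and "(r 0 - r 1)*(r 0 - r 2)*(r 1 - r 2) \<noteq> 0"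
  shows "LA (real_of_int (r 0)) (real_of_int (r 1)) (real_of_int (r 2)) (real (x 0)) (real (x 1)) (real (x 2))
     + LB (real_of_int (r 0)) (real_of_int (r 1)) (real_of_int (r 2)) (real (x 0)) (real (x 1)) (real (x 2)) * real_of_int (r m)
     + LC (real_of_int (r 0)) (real_of_int (r 1)) (real_of_int (r 2)) (real (x 0)) (real (x 1)) (real (x 2)) * (real_of_int (r m))^2 = real (x m)"
proof (rule lag_inv)
  have "(of_int (\<Sum>i<5. erel r m i * int (x i)) :: real) = 0" using assms(1) by simp
  then have "(\<Sum>i<5. of_int (erel r m i) * (real (x i))) = 0" by simp
  then show "(real_of_int (r 0) - real_of_int (r 1)) * (real_of_int (r 0) - real_of_int (r 2)) * (real_of_int (r 1) - real_of_int (r 2)) * real (x m) =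
    (real_of_int (r m) - real_of_int (r 1)) * (real_of_int (r m) - real_of_int (r 2)) * (real_of_int (r 1) - real_of_int (r 2)) * real (x 0) -
    (real_of_int (r m) - real_of_int (r 0)) * (real_of_int (r m) - real_of_int (r 2)) * (real_of_int (r 0) - real_of_int (r 2)) * real (x 1) +
    (real_of_int (r m) - real_of_int (r 0)) * (real_of_int (r m) - real_of_int (r 1)) * (real_of_int (r 0) - real_of_int (r 1)) * real (x 2)"
    unfolding erel_sum[OF assms(2)] by simp
  show "(real_of_int (r 0) - real_of_int (r 1)) * (real_of_int (r 0) - real_of_int (r 2)) * (real_of_int (r 1) - real_of_int (r 2)) \<noteq> 0"
    using assms(3) by simp
qed

lemma rel_real_triv:
  fixes x0 x1 x2 :: real
  assumes "(r0 - r1)*(r0 - r2)*(r1 - r2) \<noteq> 0"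
  shows "LA r0 r1 r2 x0 x1 x2 + LB r0 r1 r2 x0 x1 x2 * r0 + LC r0 r1 r2 x0 x1 x2 * r0^2 = x0"
    "LA r0 r1 r2 x0 x1 x2 + LB r0 r1 r2 x0 x1 x2 * r1 + LC r0 r1 r2 x0 x1 x2 * r1^2 = x1"
    "LA r0 r1 r2 x0 x1 x2 + LB r0 r1 r2 x0 x1 x2 * r2 + LC r0 r1 r2 x0 x1 x2 * r2^2 = x2"
  by (rule lag_inv[OF assms]; simp add: algebra_simps)+


lemma sphere:
  fixes r :: "nat \<Rightarrow> int"
  assumes inj: "inj_on r {..<5}"
    and b3: "(\<Sum>i<5. \<bar>erel r 3 i\<bar>) * int d < int M"
    and b4: "(\<Sum>i<5. \<bar>erel r 4 i\<bar>) * int d < int M"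
  shows "\<not> contains_QC5 r (dval M ` {xs. set xs \<subseteq> {..<d} \<and> length xs = n \<and> sqn xs = k})"
proof
  let ?F = "{xs. set xs \<subseteq> {..<d} \<and> length xs = n \<and> sqn xs = k}"
  assume "contains_QC5 r (dval M ` ?F)"
  then have "\<exists>P :: rat poly. 1 \<le> degree P \<and> degree P \<le> 2 \<and>
        (\<forall>i<5. poly P (of_int (r i)) \<in> of_nat ` (dval M ` ?F))"
    by (simp only: contains_QC5_def)
  then obtain P :: "rat poly" where P1: "1 \<le> degree P" and P2: "degree P \<le> 2"
    and PB: "\<forall>i<5. poly P (of_int (r i)) \<in> of_nat ` (dval M ` ?F)"
    by (elim exE conjE)
  have "\<forall>i<5. \<exists>xs\<in>?F. poly P (of_int (r i)) = of_nat (dval M xs)"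
  proof (intro allI impI)
    fix i :: nat assume "i < 5"
    then have "poly P (of_int (r i)) \<in> of_nat ` (dval M ` ?F)" using PB by simp
    then obtain y where y1: "y \<in> dval M ` ?F" and y2: "poly P (of_int (r i)) = of_nat y"
      by blast
    from y1 obtain xs where "xs \<in> ?F" "y = dval M xs" by blast
    with y2 have "xs \<in> ?F" "poly P (of_int (r i)) = of_nat (dval M xs)" by simp_all
    then show "\<exists>xs\<in>?F. poly P (of_int (r i)) = of_nat (dval M xs)" by blast
  qed
  then have "\<forall>i\<in>{..<5}. \<exists>xs. xs \<in> ?F \<and> poly P (of_int (r i)) = of_nat (dval M xs)"
    by blast
  from bchoice[OF this] obtain X where
    X0: "\<forall>i\<in>{..<5}. X i \<in> ?F \<and> poly P (of_int (r i)) = of_nat (dval M (X i))"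
    by blast
  have X: "\<forall>i<5. X i \<in> ?F \<and> poly P (of_int (r i)) = of_nat (dval M (X i))"
    using X0 by simp
  have Xl: "\<forall>i<5. length (X i) = n \<and> set (X i) \<subseteq> {..<d}" using X by auto
  have dd1: "r 0 \<noteq> r 1"
  proof
    assume "r 0 = r 1"
    with inj have "(0::nat) = 1" by (rule inj_onD) simp_all
    then show False by simp
  qed
  have dd2: "r 0 \<noteq> r 2"
  proof
    assume "r 0 = r 2"
    with inj have "(0::nat) = 2" by (rule inj_onD) simp_all
    then show False by simp
  qed
  have dd3: "r 1 \<noteq> r 2"
  proof
    assume "r 1 = r 2"
    with inj have "(1::nat) = 2" by (rule inj_onD) simp_all
    then show False by simp
  qed
  have dist: "r 0 \<noteq> r 1" "r 0 \<noteq> r 2" "r 1 \<noteq> r 2" using dd1 dd2 dd3 by blast+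
  then have V: "(r 0 - r 1)*(r 0 - r 2)*(r 1 - r 2) \<noteq> 0" by simp
  have dig: "\<forall>j<n. (\<Sum>i<5. erel r m i * int (X i ! j)) = 0" if m: "m = 3 \<or> m = 4" for m
  proof (rule nocarry[OF Xl])
    show "(\<Sum>i<5. \<bar>erel r m i\<bar>) * int d < int M" using m b3 b4 by auto
    show "(\<Sum>i<5. erel r m i * int (dval M (X i))) = 0"
      by (rule rel_poly[OF P2 _ m]) (use X in auto)
  qed
  define x where "x = (\<lambda>i j. real (X i ! j))"
  define R where "R = (\<lambda>i. real_of_int (r i))"
  define a where "a = (\<lambda>j. LA (R 0) (R 1) (R 2) (x 0 j) (x 1 j) (x 2 j))"
  define b where "b = (\<lambda>j. LB (R 0) (R 1) (R 2) (x 0 j) (x 1 j) (x 2 j))"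
  define c where "c = (\<lambda>j. LC (R 0) (R 1) (R 2) (x 0 j) (x 1 j) (x 2 j))"
  have fit: "a j + b j * R i + c j * (R i)^2 = x i j" if "i < 5" "j < n" for i j
  proof -
    have VR: "(R 0 - R 1)*(R 0 - R 2)*(R 1 - R 2) \<noteq> 0" unfolding R_def using dist by simp
    have "i = 0 \<or> i = 1 \<or> i = 2 \<or> i = 3 \<or> i = 4" using that by auto
    then show ?thesis
    proof (elim disjE)
      assume h: "i = 0"
      show ?thesis unfolding a_def b_def c_def h by (rule rel_real_triv(1)[OF VR])
    next
      assume h: "i = 1"
      show ?thesis unfolding a_def b_def c_def h by (rule rel_real_triv(2)[OF VR])
    next
      assume h: "i = 2"
      show ?thesis unfolding a_def b_def c_def h by (rule rel_real_triv(3)[OF VR])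
    next
      assume h: "i = 3"
      have e: "(\<Sum>ii<5. erel r 3 ii * int ((\<lambda>i. X i ! j) ii)) = 0" using dig[of 3] that(2) by simp
      have m: "(3::nat) = 3 \<or> (3::nat) = 4" by simp
      show ?thesis unfolding a_def b_def c_def x_def R_def h using rel_real[OF e m V] by simp
    next
      assume h: "i = 4"
      have e: "(\<Sum>ii<5. erel r 4 ii * int ((\<lambda>i. X i ! j) ii)) = 0" using dig[of 4] that(2) by simp
      have m: "(4::nat) = 3 \<or> (4::nat) = 4" by simp
      show ?thesis unfolding a_def b_def c_def x_def R_def h using rel_real[OF e m V] by simp
    qed
  qed
  have norm: "(\<Sum>j<n. (x i j)^2) = real k" if "i < 5" for i
  proof -
    have "sqn (X i) = k" "length (X i) = n" using X that by auto
    then have "real (\<Sum>j<n. (X i ! j)^2) = real k" unfolding sqn_def by simp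
    then show ?thesis unfolding x_def by simp
  qed
  define Q where "Q = (\<Sum>j<n. [:a j, b j, c j:]^2) - [:real k:]"
  have polyQ: "poly Q t = (\<Sum>j<n. (a j + b j * t + c j * t^2)^2) - real k" for t
    unfolding Q_def by (simp add: poly_sum algebra_simps power2_eq_square)
  have roots: "poly Q (R i) = 0" if "i < 5" for i
  proof -
    have "(\<Sum>j<n. (a j + b j * R i + c j * (R i)^2)^2) = (\<Sum>j<n. (x i j)^2)"
      using fit that by (intro sum.cong) auto
    then show ?thesis using polyQ norm that by simp
  qed
  have degQ: "degree Q \<le> 4"
  proof -
    have d3: "degree [:a j, b j, c j:] \<le> 2" for j by simp
    have "degree ([:a j, b j, c j:]^2) \<le> 4" for j
      using degree_power_le[of "[:a j, b j, c j:]" 2] d3[of j] by linarith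
    then have "degree (\<Sum>j<n. [:a j, b j, c j:]^2) \<le> 4" by (intro degree_sum_le) auto
    then show ?thesis unfolding Q_def by (intro degree_diff_le) auto
  qed
  have Q0: "Q = 0"
  proof (rule ccontr)
    assume "Q \<noteq> 0"
    then have c: "card {t. poly Q t = 0} \<le> 4" using card_poly_roots_bound[of Q] degQ by linarith
    have fin: "finite {t. poly Q t = 0}" using \<open>Q \<noteq> 0\<close> poly_roots_finite by blast
    have sub: "R ` {..<5} \<subseteq> {t. poly Q t = 0}"
    proof
      fix t assume "t \<in> R ` {..<5}"
      then obtain i where "i < 5" "t = R i" by blast
      then show "t \<in> {t. poly Q t = 0}" using roots by simp
    qed
    have injR: "inj_on R {..<5}"
    proof (rule inj_onI)
      fix x y assume "x \<in> {..<5::nat}" "y \<in> {..<5::nat}" "R x = R y"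
      then have "r x = r y" unfolding R_def by simp
      then show "x = y" using inj_onD[OF inj] \<open>x \<in> {..<5}\<close> \<open>y \<in> {..<5}\<close> by blast
    qed
    have "card (R ` {..<5}) = 5" using card_image[OF injR] by simp
    then have "5 \<le> card {t. poly Q t = 0}" using card_mono[OF fin sub] by simp
    then show False using c by simp
  qed
  have allt: "(\<Sum>j<n. (a j + b j * t + c j * t^2)^2) = real k" for t
    using polyQ[of t] Q0 by simp
  have bc: "c j = 0 \<and> b j = 0" if "j < n" for j
  proof (rule bounded_quad[of "a j" "b j" "c j" "real k"], rule allI)
    fix t
    have "(a j + b j * t + c j * t^2)^2 \<le> (\<Sum>j<n. (a j + b j * t + c j * t^2)^2)"
      using that by (intro member_le_sum) auto
    then show "(a j + b j * t + c j * t^2)^2 \<le> real k" using allt by simp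
  qed
  have same: "X i ! j = X 0 ! j" if "i < 5" "j < n" for i j
  proof -
    have "x i j = a j" using fit[OF that] bc[OF that(2)] by simp
    moreover have "x 0 j = a j" using fit[of 0 j] bc[OF that(2)] that by simp
    ultimately show ?thesis unfolding x_def by simp
  qed
  have XX: "X i = X 0" if "i < 5" for i
  proof (rule nth_equalityI)
    have l1: "length (X i) = n" using Xl that by blast
    have l0: "length (X 0) = n" using Xl by simp
    show "length (X i) = length (X 0)" using l1 l0 by simp
    fix j assume "j < length (X i)"
    then have "j < n" using l1 by simp
    then show "X i ! j = X 0 ! j" using same[OF that] by blast
  qed
  have allc: "\<forall>i<5. poly P (of_int (r i)) = poly P (of_int (r 0))"
  proof (intro allI impI)
    fix i :: nat assume "i < 5"
    have e1: "poly P (of_int (r i)) = of_nat (dval M (X i))" using X \<open>i < 5\<close> by blast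
    have e0: "poly P (of_int (r 0)) = of_nat (dval M (X 0))" using X by simp
    show "poly P (of_int (r i)) = poly P (of_int (r 0))" unfolding e1 e0 XX[OF \<open>i < 5\<close>] ..
  qed
  show False by (rule const_false[OF inj P1 P2 allc])
qed


theorem theorem12p7:
  fixes r :: "nat \<Rightarrow> int"
  assumes "inj_on r {..<5}"
  shows "\<exists>c::real. c > 0 \<and>
    (\<forall>N::nat. N \<ge> 2 \<longrightarrow>
      (\<exists>B. B \<subseteq> {..<N} \<and>
           real (card B) > real N * exp (- c * sqrt (ln (real N))) \<and>
           \<not> contains_QC5 r B))"
proof -
  define W where "W = nat (1 + (\<Sum>i<5. \<bar>erel r 3 i\<bar>) + (\<Sum>i<5. \<bar>erel r 4 i\<bar>))"
  have s3: "(\<Sum>i<5. \<bar>erel r 3 i\<bar>) \<ge> 0" "(\<Sum>i<5. \<bar>erel r 4 i\<bar>) \<ge> 0"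
    by (simp_all add: sum_nonneg)
  have intW: "int W = 1 + (\<Sum>i<5. \<bar>erel r 3 i\<bar>) + (\<Sum>i<5. \<bar>erel r 4 i\<bar>)"
    unfolding W_def using s3 by simp
  have W1: "W \<ge> 1" using intW s3 by linarith
  define c where "c = ln (2 * real W) + 5"
  have lnW0: "ln (real W) \<ge> 0" using W1 by simp
  have c_eq: "c = ln 2 + ln (real W) + 5" unfolding c_def using W1 by (simp add: ln_mult)
  have cpos: "c > 0" using c_eq lnW0 ln_ge_zero[of "2::real"] by linarith
  have "\<forall>N::nat. N \<ge> 2 \<longrightarrow>
      (\<exists>B. B \<subseteq> {..<N} \<and>
           real (card B) > real N * exp (- c * sqrt (ln (real N))) \<and>
           \<not> contains_QC5 r B)"
  proof (intro allI impI)
    fix N :: nat assume N2: "N \<ge> 2"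
    show "\<exists>B. B \<subseteq> {..<N} \<and> real (card B) > real N * exp (- c * sqrt (ln (real N))) \<and> \<not> contains_QC5 r B"
    proof (cases "sqrt (ln (real N)) \<ge> 2 + ln (real W)")
      case True
      obtain n d where n1: "n \<ge> 1" and d1: "d \<ge> 1" and WdN: "(W*d)^n \<le> N"
        and est: "real N * exp (- c * sqrt (ln (real N))) < real (d^n) / real (n*d^2)"
        using params[OF W1 N2 True] unfolding c_def by blast
      define M where "M = W * d"
      define S where "S = {xs. set xs \<subseteq> {..<d} \<and> length xs = n}"
      have finS: "finite S" unfolding S_def by (rule finite_lists_length_eq) simp
      have cardS: "card S = d^n" unfolding S_def using card_lists_length_eq[of "{..<d}" n] by simp
      have Kpos: "n * d^2 > 0" using n1 d1 by simp
      have img: "sqn ` S \<subseteq> {..<n*d^2}"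
      proof
        fix y assume "y \<in> sqn ` S"
        then obtain xs where xs: "xs \<in> S" "y = sqn xs" by auto
        have "sqn xs = (\<Sum>j<n. (xs ! j)^2)" using xs unfolding sqn_def S_def by simp
        also have "\<dots> < (\<Sum>j<n. d^2)"
        proof (rule sum_strict_mono)
          fix j assume "j \<in> {..<n}"
          then have "xs ! j < d" using xs unfolding S_def by (auto dest!: nth_mem)
          then show "(xs ! j)^2 < d^2" by (simp add: power_strict_mono)
        qed (use n1 in \<open>auto simp: lessThan_empty_iff\<close>)
        finally show "y \<in> {..<n*d^2}" using xs by (simp add: mult.commute)
      qed
      obtain k where k: "card S \<le> (n*d^2) * card {x\<in>S. sqn x = k}"
        using pigeon[OF finS img Kpos] by blast
      define F where "F = {xs. set xs \<subseteq> {..<d} \<and> length xs = n \<and> sqn xs = k}"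
      have FS: "{x\<in>S. sqn x = k} = F" unfolding F_def S_def by auto
      define B where "B = dval M ` F"
      have dM: "d \<le> M" unfolding M_def using W1 by simp
      have injB: "inj_on (dval M) F"
      proof (rule inj_onI)
        fix x y assume x: "x \<in> F" and y: "y \<in> F" and e: "dval M x = dval M y"
        have "length x = length y" using x y unfolding F_def by simp
        moreover have "set x \<subseteq> {..<M}" using x dM unfolding F_def by auto
        moreover have "set y \<subseteq> {..<M}" using y dM unfolding F_def by auto
        ultimately show "x = y" using e by (rule dval_inj)
      qed
      have cardB: "card B = card F" unfolding B_def using injB by (simp add: card_image)
      have BN: "B \<subseteq> {..<N}"
      proof
        fix y assume "y \<in> B"
        then obtain xs where xs: "xs \<in> F" "y = dval M xs" unfolding B_def by auto
        have "set xs \<subseteq> {..<M}" using xs dM unfolding F_def by auto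
        then have "dval M xs < M ^ length xs" by (rule dval_lt)
        then show "y \<in> {..<N}" using xs WdN unfolding F_def M_def by auto
      qed
      have bound: "real (d^n) / real (n*d^2) \<le> real (card B)"
      proof -
        have "real (d^n) \<le> real (n*d^2) * real (card B)"
          using k cardS FS cardB by (metis of_nat_le_iff of_nat_mult)
        then show ?thesis using Kpos by (simp add: divide_le_eq mult.commute)
      qed
      have noqc: "\<not> contains_QC5 r B"
        unfolding B_def F_def
      proof (rule sphere[OF assms])
        have lt: "(\<Sum>i<5. \<bar>erel r 3 i\<bar>) < int W" using intW s3 by linarith
        have "int d > 0" using d1 by simp
        show "(\<Sum>i<5. \<bar>erel r 3 i\<bar>) * int d < int M"
          unfolding M_def using mult_strict_right_mono[OF lt \<open>int d > 0\<close>] by simp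
        have lt: "(\<Sum>i<5. \<bar>erel r 4 i\<bar>) < int W" using intW s3 by linarith
        have "int d > 0" using d1 by simp
        show "(\<Sum>i<5. \<bar>erel r 4 i\<bar>) * int d < int M"
          unfolding M_def using mult_strict_right_mono[OF lt \<open>int d > 0\<close>] by simp
      qed
      show ?thesis using BN est bound noqc by (intro exI[of _ B]) auto
    next
      case False
      define L where "L = ln (real N)"
      define s where "s = sqrt L"
      have L0: "L > 0" unfolding L_def using N2 by simp
      have s0: "s > 0" unfolding s_def using L0 by simp
      have sL: "s * s = L" unfolding s_def using L0 by simp
      have sc: "s < c" using False c_eq unfolding s_def L_def
        using ln_ge_zero[of "2::real"] by linarith
      have "L < c * s" using sL sc s0 by (metis mult_strict_right_mono)
      then have "real N * exp (- c * s) < 1"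
      proof -
        have "real N = exp L" unfolding L_def using N2 by simp
        then have "real N * exp (- c * s) = exp (L - c * s)" by (simp add: exp_diff exp_minus field_simps)
        also have "\<dots> < 1" using \<open>L < c * s\<close> by simp
        finally show ?thesis .
      qed
      moreover have "\<not> contains_QC5 r {0}"
      proof
        assume "contains_QC5 r {0}"
        then obtain P :: "rat poly" where P1: "1 \<le> degree P" and P2: "degree P \<le> 2"
          and PB: "\<forall>i<5. poly P (of_int (r i)) \<in> of_nat ` {0::nat}"
          unfolding contains_QC5_def by blast
        show False by (rule const_false[OF assms P1 P2]) (use PB in auto)
      qed
      ultimately show ?thesis using N2 unfolding s_def L_def by (intro exI[of _ "{0}"]) auto
    qed
  qed
  then show ?thesis using cpos by blast
qed

end
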